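(* Let $f:\mathbb{R}^n\to\mathbb{R}$ be a continuous loss function which is strictly convex and $L$-smooth, with global minimum $w^*$, and let $E(w):=f(w)-f(w^* )$. Consider sequences $(w_i)$ generated by the Loss-Guarded L2O algorithm using deterministic gradient descent with step size $\frac{\alpha}{L}$, $\alpha\in\,]0,2[$, as the guarding mechanism. Then $E$ is a Lyapunov function for such sequences, i.e.: (1) $E$ is continuous; (2) $E(w)=0$ if and only if $w=w^*$; (3) $E(w)>0$ if and only if $w\neq w^*$; (4) $E(w_{i+1})\le E(w_i)$ for all $i\in\mathbb{N}$.
   Context: Loss-Guarded L2O algorithm with deterministic gradient descent: at each step $i$, an arbitrary black-box rule proposes a point $y_i$, the fallback proposes $z_i=w_i-\frac{\alpha}{L}\nabla f(w_i)$, and $w_{i+1}=y_i$ if $f(y_i)<f(z_i)$, otherwise $w_{i+1}=z_i$. $f$ is $L$-smooth means $f(y)\le f(x)+\langle\nabla f(x),y-x\rangle+\frac{L}{2}\|y-x\|_2^2$ for all $x,y$. *)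

theory Defs
  imports "HOL-Analysis.Analysis"
begin

definition strictly_convex_on :: "'a::real_vector set \<Rightarrow> ('a \<Rightarrow> real) \<Rightarrow> bool" where
  "strictly_convex_on S f \<longleftrightarrow>
     (\<forall>x\<in>S. \<forall>y\<in>S. x \<noteq> y \<longrightarrow> (\<forall>t::real. 0 < t \<and> t < 1 \<longrightarrow>
        f ((1 - t) *\<^sub>R x + t *\<^sub>R y) < (1 - t) * f x + t * f y))"

definition L_smooth :: "real \<Rightarrow> ('a::real_inner \<Rightarrow> real) \<Rightarrow> ('a \<Rightarrow> 'a) \<Rightarrow> bool" where
  "L_smooth L f g \<longleftrightarrow>
     (\<forall>x y. f y \<le> f x + inner (g x) (y - x) + L / 2 * (norm (y - x))\<^sup>2)"

definition gd_step :: "real \<Rightarrow> real \<Rightarrow> ('a::real_inner \<Rightarrow> 'a) \<Rightarrow> 'a \<Rightarrow> 'a" where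
  "gd_step \<alpha> L g w = w - (\<alpha> / L) *\<^sub>R g w"

text \<open>(w_i) is generated by Loss-Guarded L2O from black-box proposals (y_i),
  with gradient descent as guard.\<close>
definition loss_guarded_L2O ::
  "('a::real_inner \<Rightarrow> real) \<Rightarrow> ('a \<Rightarrow> 'a) \<Rightarrow> real \<Rightarrow> real \<Rightarrow> (nat \<Rightarrow> 'a) \<Rightarrow> (nat \<Rightarrow> 'a) \<Rightarrow> bool" where
  "loss_guarded_L2O f g L \<alpha> y w \<longleftrightarrow>
     (\<forall>i. w (Suc i) = (if f (y i) < f (gd_step \<alpha> L g (w i)) then y i else gd_step \<alpha> L g (w i)))"

end

theory Submission
  imports Defs
begin

theorem theorem2:
  fixes f :: "real ^ 'n \<Rightarrow> real" and g :: "real ^ 'n \<Rightarrow> real ^ 'n"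
    and L \<alpha> :: real and wstar :: "real ^ 'n"
    and y w :: "nat \<Rightarrow> real ^ 'n" and E :: "real ^ 'n \<Rightarrow> real"
  assumes cont: "continuous_on UNIV f"
    and grad: "\<And>x. (f has_derivative (\<lambda>h. inner (g x) h)) (at x)"
    and sconv: "strictly_convex_on UNIV f"
    and Lpos: "L > 0"
    and smooth: "L_smooth L f g"
    and min: "\<And>v. f wstar \<le> f v"
    and E_def: "\<And>v. E v = f v - f wstar"
    and alpha: "0 < \<alpha>" "\<alpha> < 2"
    and alg: "loss_guarded_L2O f g L \<alpha> y w"
  shows "continuous_on UNIV E
       \<and> (\<forall>v. E v = 0 \<longleftrightarrow> v = wstar)
       \<and> (\<forall>v. E v > 0 \<longleftrightarrow> v \<noteq> wstar)
       \<and> (\<forall>i. E (w (Suc i)) \<le> E (w i))"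
proof -
  have c1: "continuous_on UNIV E"
  proof -
    have "E = (\<lambda>v. f v - f wstar)" using E_def by auto
    then show ?thesis using cont by (auto intro!: continuous_intros)
  qed
  have c2: "\<forall>v. E v = 0 \<longleftrightarrow> v = wstar"
  proof (intro allI iffI)
    fix v assume h: "E v = 0"
    show "v = wstar"
    proof (rule ccontr)
      assume ne: "v \<noteq> wstar"
      have "f ((1 - 1/2) *\<^sub>R v + (1/2::real) *\<^sub>R wstar) < (1 - 1/2) * f v + 1/2 * f wstar"
        proof -
        have "\<forall>t::real. 0 < t \<and> t < 1 \<longrightarrow>
          f ((1 - t) *\<^sub>R v + t *\<^sub>R wstar) < (1 - t) * f v + t * f wstar"
          using sconv ne unfolding strictly_convex_on_def by blast
        then show ?thesis by (erule_tac x="1/2" in allE) simp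
      qed
      moreover have "f v = f wstar" using h E_def by auto
      ultimately show False using min[of "(1 - 1/2) *\<^sub>R v + (1/2::real) *\<^sub>R wstar"] by auto
    qed
  qed (simp add: E_def)
  have c3: "\<forall>v. E v > 0 \<longleftrightarrow> v \<noteq> wstar"
    proof
    fix v
    have "E v \<ge> 0" using min[of v] E_def[of v] by simp
    then show "E v > 0 \<longleftrightarrow> v \<noteq> wstar" using c2 by force
  qed
  have c4: "E (w (Suc i)) \<le> E (w i)" for i
  proof -
    let ?x = "w i"
    let ?z = "gd_step \<alpha> L g ?x"
    let ?G = "g ?x"
    have "f ?z \<le> f ?x + inner ?G (?z - ?x) + L / 2 * (norm (?z - ?x))\<^sup>2"
      using smooth unfolding L_smooth_def by blast
    also have "?z - ?x = - ((\<alpha> / L) *\<^sub>R ?G)" unfolding gd_step_def by simp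
    also have "inner ?G (- ((\<alpha> / L) *\<^sub>R ?G)) = - (\<alpha> / L) * (norm ?G)\<^sup>2"
      by (simp add: power2_norm_eq_inner)
    also have "(norm (- ((\<alpha> / L) *\<^sub>R ?G)))\<^sup>2 = (\<alpha> / L)\<^sup>2 * (norm ?G)\<^sup>2"
      using Lpos alpha by (simp add: power_mult_distrib power_divide)
    finally have fz: "f ?z \<le> f ?x - (\<alpha> / L) * (1 - \<alpha> / 2) * (norm ?G)\<^sup>2"
      using Lpos by (simp add: power2_eq_square field_simps)
    have "0 \<le> (\<alpha> / L) * (1 - \<alpha> / 2) * (norm ?G)\<^sup>2"
      using Lpos alpha by simp
    hence "f ?z \<le> f ?x" using fz by linarith
    moreover have "f (w (Suc i)) \<le> f ?z"
      using alg unfolding loss_guarded_L2O_def by (metis order_less_imp_le order_refl)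
    ultimately show ?thesis using E_def by simp
  qed
  show ?thesis using c1 c2 c3 c4 by blast
qed

end
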